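(* Let $\{M_j\}$ be a collection of hermitian $n\times n$ matrices. A nontrivial subspace $V\subset\mathbb{C}^n$ is minimal with respect to $\mathrm{Span}_{\mathbb{R}}\{M_j\}$ if and only if there exists a positive semi-definite hermitian $n\times n$ matrix $N$, unique up to multiplication by a positive scalar, such that the range of $N$ equals $V$ and $\langle M_j,N\rangle=0$ for all $j$.
   Context: The real inner product on hermitian $n\times n$ matrices is $\langle A,B\rangle=\mathrm{Tr}(AB)$. For a hermitian matrix $M$ and a subspace $V\subset\mathbb{C}^n$, the restriction of $M$ to $V$ is the restriction of the quadratic form $v\mapsto\bar v^TMv$ to $V$. $\mathrm{Span}_{\mathbb{R}}\{M_j\}$ is indefinite on a nontrivial subspace $V$ if no real linear combination of the $M_j$ is positive definite when restricted to $V$. A nontrivial subspace $V$ is minimal with respect to $\mathrm{Span}_{\mathbb{R}}\{M_j\}$ if $\mathrm{Span}_{\mathbb{R}}\{M_j\}$ is indefinite on $V$ but not indefinite on any nontrivial proper subspace of $V$. *)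

theory Defs
  imports "HOL-Analysis.Analysis"
begin

definition hermitian :: "complex^'n^'n \<Rightarrow> bool" where
  "hermitian A \<longleftrightarrow> (\<forall>i k. A $ i $ k = cnj (A $ k $ i))"

definition qform :: "complex^'n^'n \<Rightarrow> complex^'n \<Rightarrow> complex" where
  "qform A v = (\<Sum>i\<in>UNIV. \<Sum>k\<in>UNIV. cnj (v $ i) * A $ i $ k * v $ k)"

definition csubspace :: "(complex^'n) set \<Rightarrow> bool" where
  "csubspace V \<longleftrightarrow> 0 \<in> V \<and> (\<forall>x\<in>V. \<forall>y\<in>V. x + y \<in> V) \<and> (\<forall>c. \<forall>x\<in>V. c *s x \<in> V)"

definition posdef_on :: "complex^'n^'n \<Rightarrow> (complex^'n) set \<Rightarrow> bool" where
  "posdef_on A V \<longleftrightarrow> (\<forall>v\<in>V. v \<noteq> 0 \<longrightarrow> Re (qform A v) > 0)"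

text \<open>Span_R{M_j} is indefinite on V: no real linear combination (element of the real span)
  is positive definite on V.\<close>
definition indefinite_on :: "(complex^'n^'n) set \<Rightarrow> (complex^'n) set \<Rightarrow> bool" where
  "indefinite_on Ms V \<longleftrightarrow> \<not> (\<exists>A\<in>span Ms. posdef_on A V)"

definition minimal_wrt :: "(complex^'n^'n) set \<Rightarrow> (complex^'n) set \<Rightarrow> bool" where
  "minimal_wrt Ms V \<longleftrightarrow> csubspace V \<and> V \<noteq> {0} \<and> indefinite_on Ms V \<and>
     (\<forall>W. csubspace W \<and> W \<noteq> {0} \<and> W \<subset> V \<longrightarrow> \<not> indefinite_on Ms W)"

definition psd :: "complex^'n^'n \<Rightarrow> bool" where
  "psd N \<longleftrightarrow> hermitian N \<and> (\<forall>v. Re (qform N v) \<ge> 0)"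

definition hinner :: "complex^'n^'n \<Rightarrow> complex^'n^'n \<Rightarrow> complex" where
  "hinner A B = trace (A ** B)"

end

theory Submission
  imports Defs
begin


definition cin :: "complex^'n \<Rightarrow> complex^'n \<Rightarrow> complex" where
  "cin x y = (\<Sum>i\<in>UNIV. cnj (x$i) * y$i)"

definition outer :: "complex^'n \<Rightarrow> complex^'n^'n" where
  "outer v = (\<chi> i k. v$i * cnj (v$k))"

lemma cscaleR: "c *\<^sub>R (z::complex) = complex_of_real c * z"
  by (simp add: scaleR_conv_of_real)
lemma vec_scaleR_comp: "((c *\<^sub>R x)::complex^'n) $ i = of_real c * x $ i"
  by (simp add: cscaleR)
lemma mat_scaleR_comp: "((c *\<^sub>R A)::complex^'n^'m) $ i $ k = of_real c * A $ i $ k"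
  by (simp add: cscaleR)

lemma qform_cin: "qform A v = cin v (A *v v)"
  unfolding qform_def cin_def matrix_vector_mult_def
  by (simp add: sum_distrib_left mult.assoc)

lemma Re_cin: "Re (cin x y) = inner x y"
  unfolding cin_def inner_vec_def inner_complex_def by (simp add: Re_sum)

lemma Re_cin_self: "Re (cin x x) = (norm x)^2"
  by (simp add: Re_cin power2_norm_eq_inner)

lemma cnj_cin: "cnj (cin x y) = cin y x"
  unfolding cin_def by (simp add: mult.commute)

lemma cin_self_real: "cin x x = of_real ((norm x)^2)"
proof -
  have "cnj (cin x x) = cin x x" by (simp add: cnj_cin)
  hence "Im (cin x x) = 0" by (metis Reals_cnj_iff complex_is_Real_iff)
  thus ?thesis using Re_cin_self by (metis complex_eq_iff of_real_Re complex_is_Real_iff)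
qed

lemma hermD: "hermitian A \<Longrightarrow> A$i$k = cnj (A$k$i)"
  unfolding hermitian_def by blast
lemma hermD': "hermitian A \<Longrightarrow> cnj (A$i$k) = A$k$i"
  unfolding hermitian_def by (metis complex_cnj_cnj)

lemma herm_adj: assumes h: "hermitian A" shows "cin x (A *v y) = cin (A *v x) y"
proof -
  have "cin x (A *v y) = (\<Sum>i\<in>UNIV. \<Sum>k\<in>UNIV. cnj (x$i) * A$i$k * y$k)"
    unfolding cin_def matrix_vector_mult_def by (simp add: sum_distrib_left mult.assoc)
  also have "\<dots> = (\<Sum>k\<in>UNIV. \<Sum>i\<in>UNIV. cnj (x$i) * A$i$k * y$k)"
    by (rule sum.swap)
  also have "\<dots> = (\<Sum>k\<in>UNIV. \<Sum>i\<in>UNIV. cnj (A$k$i * x$i) * y$k)"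
    apply (rule sum.cong[OF refl])+
    using hermD'[OF h] by (simp add: mult.commute)
  also have "\<dots> = cin (A *v x) y"
    unfolding cin_def matrix_vector_mult_def by (simp add: sum_distrib_right cnj_sum)
  finally show ?thesis .
qed

lemma cin_add_right: "cin x (y + z) = cin x y + cin x z"
  unfolding cin_def by (simp add: distrib_left sum.distrib)
lemma cin_add_left: "cin (x + y) z = cin x z + cin y z"
  unfolding cin_def by (simp add: distrib_right sum.distrib)
lemma cin_diff_right: "cin x (y - z) = cin x y - cin x z"
  unfolding cin_def by (simp add: right_diff_distrib sum_subtractf)
lemma cin_diff_left: "cin (x - y) z = cin x z - cin y z"
  unfolding cin_def by (simp add: left_diff_distrib sum_subtractf)
lemma cin_smult_right: "cin x (c *s y) = c * cin x y"
  unfolding cin_def by (simp add: sum_distrib_left mult.left_commute)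
lemma cin_smult_left: "cin (c *s x) y = cnj c * cin x y"
  unfolding cin_def by (simp add: sum_distrib_left mult.assoc)
lemma cin_scaleR_right: "cin x (c *\<^sub>R y) = of_real c * cin x y"
  unfolding cin_def by (simp add: sum_distrib_left cscaleR mult.left_commute)
lemma cin_scaleR_left: "cin (c *\<^sub>R x) y = of_real c * cin x y"
  unfolding cin_def by (simp add: sum_distrib_left cscaleR mult.assoc)
lemma cin_0_right[simp]: "cin x 0 = 0" unfolding cin_def by simp
lemma cin_0_left[simp]: "cin 0 x = 0" unfolding cin_def by simp

lemma mv_smult: "(A::complex^'n^'m) *v (c *s x) = c *s (A *v x)"
  unfolding matrix_vector_mult_def by (simp add: vec_eq_iff sum_distrib_left mult.left_commute)
lemma mv_scaleR: "(A::complex^'n^'m) *v (c *\<^sub>R x) = c *\<^sub>R (A *v x)"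
  using linear_iff matrix_vector_mul_linear by blast
lemma scaleR_mv: "((c *\<^sub>R A)::complex^'n^'m) *v x = c *\<^sub>R (A *v x)"
  unfolding matrix_vector_mult_def by (simp add: vec_eq_iff scaleR_sum_right)
lemma scaleR_smult: "(c *\<^sub>R (x::complex^'n)) = complex_of_real c *s x"
  by (simp add: vec_eq_iff cscaleR)

lemma qform_add: "qform (A + B) v = qform A v + qform B v"
  by (simp add: qform_cin matrix_vector_mult_add_rdistrib cin_add_right)
lemma qform_diff: "qform (A - B) v = qform A v - qform B v"
  by (simp add: qform_cin matrix_vector_mult_diff_rdistrib cin_diff_right)
lemma qform_scaleR: "qform (c *\<^sub>R A) v = of_real c * qform A v"
  by (simp add: qform_cin scaleR_mv cin_scaleR_right)
lemma qform_scaleR_vec: "qform A (c *\<^sub>R v) = of_real (c^2) * qform A v"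
  by (simp add: qform_cin mv_scaleR cin_scaleR_right cin_scaleR_left power2_eq_square)

lemma herm_add: "hermitian A \<Longrightarrow> hermitian B \<Longrightarrow> hermitian (A + B)"
  unfolding hermitian_def by (metis complex_cnj_add vector_add_component)
lemma herm_diff: "hermitian A \<Longrightarrow> hermitian B \<Longrightarrow> hermitian (A - B)"
  unfolding hermitian_def by (metis complex_cnj_diff vector_minus_component)
lemma herm_scaleR: "hermitian A \<Longrightarrow> hermitian (c *\<^sub>R A)"
  unfolding hermitian_def by (metis complex_cnj_scaleR vector_scaleR_component)
lemma herm_0: "hermitian 0"
  unfolding hermitian_def by simp

lemma psd_add: "psd A \<Longrightarrow> psd B \<Longrightarrow> psd (A + B)"
  unfolding psd_def by (simp add: herm_add qform_add add_nonneg_nonneg)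
lemma psd_scaleR: "psd A \<Longrightarrow> c \<ge> 0 \<Longrightarrow> psd (c *\<^sub>R A)"
  unfolding psd_def by (simp add: herm_scaleR qform_scaleR)

lemma outer_mv: "outer v *v w = cin v w *s v"
  unfolding outer_def matrix_vector_mult_def cin_def
  by (simp add: vec_eq_iff sum_distrib_left mult.assoc mult.commute mult.left_commute)
lemma herm_outer: "hermitian (outer v)"
  unfolding hermitian_def outer_def by simp
lemma qform_outer: "qform (outer v) w = of_real ((cmod (cin v w))^2)"
proof -
  have "qform (outer v) w = cin w v * cin v w"
    by (simp add: qform_cin outer_mv cin_smult_right mult.commute)
  also have "cin w v = cnj (cin v w)" by (simp add: cnj_cin)
  finally show ?thesis using complex_norm_square[of "cin v w"] by simp
qed
lemma psd_outer: "psd (outer v)"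
  unfolding psd_def by (simp add: herm_outer qform_outer)
lemma inner_outer: "inner A (outer v) = Re (qform A v)"
  unfolding inner_vec_def inner_complex_def outer_def qform_def
  by (simp add: Re_sum algebra_simps)
lemma trace_outer: "Re (trace (outer v)) = (norm v)^2"
  unfolding trace_def outer_def using Re_cin_self[of v] unfolding cin_def
  by (simp add: Re_sum mult.commute)
lemma outer_scaleR: "outer (c *\<^sub>R v) = (c^2) *\<^sub>R outer v"
  unfolding outer_def by (simp add: vec_eq_iff vec_scaleR_comp mat_scaleR_comp power2_eq_square)
lemma outer_0[simp]: "outer 0 = 0"
  unfolding outer_def by (simp add: vec_eq_iff)

lemma inner_hinner: assumes h: "hermitian M" shows "inner M N = Re (hinner M N)"
proof -
  have "inner M N = (\<Sum>i\<in>UNIV. \<Sum>k\<in>UNIV. Re (cnj (M$i$k) * N$i$k))"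
    unfolding inner_vec_def inner_complex_def by simp
  also have "\<dots> = (\<Sum>k\<in>UNIV. \<Sum>i\<in>UNIV. Re (cnj (M$i$k) * N$i$k))"
    by (rule sum.swap)
  also have "\<dots> = (\<Sum>k\<in>UNIV. \<Sum>i\<in>UNIV. Re (M$k$i * N$i$k))"
    apply (rule sum.cong[OF refl])+
    using hermD'[OF h] by simp
  also have "\<dots> = Re (hinner M N)"
    unfolding hinner_def trace_def matrix_matrix_mult_def by (simp add: Re_sum)
  finally show ?thesis .
qed

lemma hinner_real: assumes h: "hermitian M" "hermitian N" shows "hinner M N = of_real (inner M N)"
proof -
  have "cnj (hinner M N) = (\<Sum>i\<in>UNIV. \<Sum>k\<in>UNIV. cnj (M$i$k) * cnj (N$k$i))"
    unfolding hinner_def trace_def matrix_matrix_mult_def by (simp add: cnj_sum)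
  also have "\<dots> = (\<Sum>i\<in>UNIV. \<Sum>k\<in>UNIV. M$k$i * N$i$k)"
    apply (rule sum.cong[OF refl])+
    using hermD'[OF h(1)] hermD'[OF h(2)] by simp
  also have "\<dots> = (\<Sum>k\<in>UNIV. \<Sum>i\<in>UNIV. M$k$i * N$i$k)"
    by (rule sum.swap)
  also have "\<dots> = hinner M N"
    unfolding hinner_def trace_def matrix_matrix_mult_def by simp
  finally have "Im (hinner M N) = 0" by (metis Reals_cnj_iff complex_is_Real_iff)
  thus ?thesis using inner_hinner[OF h(1)] by (simp add: complex_eq_iff)
qed



lemma qform_real: "hermitian N \<Longrightarrow> qform N w = of_real (Re (qform N w))"
proof -
  assume h: "hermitian N"
  have "cnj (qform N w) = qform N w"
    unfolding qform_cin by (simp add: cnj_cin herm_adj[OF h])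
  thus ?thesis by (metis Reals_cnj_iff complex_is_Real_iff of_real_Re)
qed

lemma psd_herm: "psd N \<Longrightarrow> hermitian N" unfolding psd_def by blast
lemma psd_nonneg: "psd N \<Longrightarrow> Re (qform N v) \<ge> 0" unfolding psd_def by blast

lemma psd_kernel:
  assumes p: "psd N" and z: "Re (qform N v) = 0"
  shows "N *v v = 0"
proof -
  have h: "hermitian N" using p psd_herm by blast
  define u where "u = N *v v"
  define a where "a = (norm u)^2"
  define b where "b = Re (qform N u)"
  have b0: "b \<ge> 0" using psd_nonneg[OF p] b_def by simp
  have exp: "Re (qform N (v - s *\<^sub>R u)) = - 2 * s * a + s^2 * b" for s
  proof -
    have e1: "cin v (N *v u) = cin u u" using herm_adj[OF h, of v u] u_def by simp
    have e2: "cin u (N *v v) = cin u u" using u_def by simp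
    have "qform N (v - s *\<^sub>R u) = qform N v - of_real s * cin v (N *v u) - of_real s * cin u (N *v v)
        + of_real s * of_real s * qform N u"
      unfolding qform_cin
      by (simp add: matrix_vector_mult_diff_distrib mv_scaleR cin_diff_left cin_diff_right
          cin_scaleR_left cin_scaleR_right algebra_simps)
    hence "Re (qform N (v - s *\<^sub>R u)) = Re (qform N v) - 2 * s * Re (cin u u) + s^2 * b"
      unfolding e1 e2 b_def by (simp add: power2_eq_square)
    thus ?thesis using z a_def Re_cin_self[of u] by simp
  qed
  have ineq: "0 \<le> - 2 * s * a + s^2 * b" for s
    using psd_nonneg[OF p, of "v - s *\<^sub>R u"] exp by simp
  have a0: "a \<ge> 0" using a_def by simp
  have "a = 0"
  proof (rule ccontr)
    assume "a \<noteq> 0"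
    hence ap: "a > 0" using a0 by simp
    define s where "s = a / (b + 1)"
    have sp: "s > 0" using ap b0 s_def by simp
    have "0 \<le> - 2 * s * a + s^2 * b" by (rule ineq)
    hence "2 * a \<le> s * b" using sp by (simp add: power2_eq_square algebra_simps)
    moreover have "s * b < a" unfolding s_def using ap b0
      by (simp add: field_simps)
    ultimately show False using ap by simp
  qed
  thus ?thesis using a_def u_def by simp
qed

lemma matrix_nonzero: "(N::complex^'n^'n) \<noteq> 0 \<Longrightarrow> \<exists>w. N *v w \<noteq> 0"
  using matrix_eq[of N 0] by auto

lemma psd_pos_vec:
  assumes "psd N" "N *v w \<noteq> 0" shows "Re (qform N w) > 0"
  using psd_kernel[OF assms(1)] psd_nonneg[OF assms(1), of w] assms(2) by force

lemma subspace_range: "subspace (range (\<lambda>v. (N::complex^'n^'n) *v v))"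
  unfolding subspace_def
  by (metis (no_types, lifting) matrix_vector_mult_0_right matrix_vector_right_distrib mv_scaleR rangeE rangeI)



lemma peel:
  assumes p: "psd N" and nz: "N *v w \<noteq> 0"
  defines "\<alpha> \<equiv> Re (qform N w)" and "u \<equiv> N *v w"
  defines "N' \<equiv> N - (1/\<alpha>) *\<^sub>R outer u"
  shows "psd N'" "N' *v w = 0" "range (\<lambda>v. N' *v v) \<subseteq> range (\<lambda>v. N *v v)"
        "u \<notin> range (\<lambda>v. N' *v v)"
proof -
  have h: "hermitian N" using p psd_herm by blast
  have ap: "\<alpha> > 0" unfolding \<alpha>_def using psd_pos_vec[OF p nz] .
  have qw: "qform N w = of_real \<alpha>" unfolding \<alpha>_def using qform_real[OF h] .
  have cwu: "cin w u = of_real \<alpha>" using qw unfolding u_def qform_cin .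
  have cuw: "cin u w = of_real \<alpha>" using cwu cnj_cin[of w u] by (metis complex_cnj_complex_of_real)
  have CS: "(cmod (cin u x))^2 \<le> \<alpha> * Re (qform N x)" for x
  proof -
    define \<beta> where "\<beta> = cin u x"
    define l where "l = \<beta> / of_real \<alpha>"
    have e1: "cin w (N *v x) = \<beta>" unfolding \<beta>_def u_def using herm_adj[OF h] by simp
    have e2: "cin x u = cnj \<beta>" unfolding \<beta>_def by (simp add: cnj_cin)
    have "qform N (x - l *s w) = qform N x - l * cnj \<beta> - cnj l * \<beta> + cnj l * l * of_real \<alpha>"
      unfolding qform_cin
      by (simp add: matrix_vector_mult_diff_distrib mv_smult cin_diff_left cin_diff_right
          cin_smult_left cin_smult_right e1 e2 cwu u_def[symmetric] algebra_simps)
    also have "\<dots> = qform N x - \<beta> * cnj \<beta> / of_real \<alpha>"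
      unfolding l_def using ap by (simp add: field_simps)
    also have "\<beta> * cnj \<beta> = of_real ((cmod \<beta>)^2)" using complex_norm_square[of \<beta>] by simp
    also have "qform N x - of_real ((cmod \<beta>)^2) / of_real \<alpha> = qform N x - of_real ((cmod \<beta>)^2 / \<alpha>)"
      by simp
    finally have "Re (qform N (x - l *s w)) = Re (qform N x) - (cmod \<beta>)^2 / \<alpha>"
      by simp
    moreover have "Re (qform N (x - l *s w)) \<ge> 0" by (rule psd_nonneg[OF p])
    ultimately have "0 \<le> Re (qform N x) - (cmod \<beta>)^2 / \<alpha>" by simp
    hence "(cmod \<beta>)^2 / \<alpha> \<le> Re (qform N x)" by simp
    thus ?thesis unfolding \<beta>_def using ap by (simp add: divide_le_eq mult.commute)
  qed
  show "psd N'"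
    unfolding psd_def
  proof
    show "hermitian N'" unfolding N'_def by (simp add: herm_diff herm_scaleR herm_outer h)
    show "\<forall>v. 0 \<le> Re (qform N' v)"
    proof
      fix x
      have "Re (qform N' x) = Re (qform N x) - (1/\<alpha>) * (cmod (cin u x))^2"
        unfolding N'_def by (simp add: qform_diff qform_scaleR qform_outer)
      moreover have "(1/\<alpha>) * (cmod (cin u x))^2 \<le> (1/\<alpha>) * (\<alpha> * Re (qform N x))"
        using CS[of x] ap by (intro mult_left_mono) auto
      ultimately show "0 \<le> Re (qform N' x)" using ap by simp
    qed
  qed
  have Nx: "N' *v x = N *v (x - (1/\<alpha>) *\<^sub>R (cin u x *s w))" for x
    unfolding N'_def
    by (simp add: matrix_vector_mult_diff_rdistrib matrix_vector_mult_diff_distrib scaleR_mv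
        mv_scaleR mv_smult outer_mv u_def)
  show Nw: "N' *v w = 0"
    unfolding Nx cuw using ap
    by (simp add: scaleR_smult vector_smult_assoc matrix_vector_mult_diff_distrib
        flip: of_real_mult)
  show "range (\<lambda>v. N' *v v) \<subseteq> range (\<lambda>v. N *v v)"
    using Nx by auto
  show "u \<notin> range (\<lambda>v. N' *v v)"
  proof
    assume "u \<in> range (\<lambda>v. N' *v v)"
    then obtain y where y: "u = N' *v y" by auto
    have hN': "hermitian N'" unfolding N'_def by (simp add: herm_diff herm_scaleR herm_outer h)
    have "cin w u = cin (N' *v w) y" using y herm_adj[OF hN'] by simp
    hence "cin w u = 0" using Nw by simp
    thus False using cwu ap by simp
  qed
qed

lemma psd_decomp:
  "psd N \<Longrightarrow> \<exists>us. set us \<subseteq> range (\<lambda>v. N *v v) \<and> N = sum_list (map outer us)"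
proof (induct "dim (range (\<lambda>v. N *v v))" arbitrary: N rule: less_induct)
  case less
  show ?case
  proof (cases "N = 0")
    case True thus ?thesis by (intro exI[of _ "[]"]) simp
  next
    case False
    then obtain w where nz: "N *v w \<noteq> 0" using matrix_nonzero by blast
    define \<alpha> where "\<alpha> = Re (qform N w)"
    define u where "u = N *v w"
    define N' where "N' = N - (1/\<alpha>) *\<^sub>R outer u"
    note P = peel[OF less(2) nz, folded \<alpha>_def u_def, folded N'_def]
    have ap: "\<alpha> > 0" unfolding \<alpha>_def using psd_pos_vec[OF less(2) nz] .
    have "u \<in> range (\<lambda>v. N *v v)" unfolding u_def by simp
    hence ps: "range (\<lambda>v. N' *v v) \<subset> range (\<lambda>v. N *v v)" using P(3,4) by blast
    have "dim (range (\<lambda>v. N' *v v)) < dim (range (\<lambda>v. N *v v))"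
      apply (rule eucl.dim_psubset)
      using ps by (simp add: span_eq_iff[THEN iffD2, OF subspace_range])
    then obtain us where us: "set us \<subseteq> range (\<lambda>v. N' *v v)" "N' = sum_list (map outer us)"
      using less(1) P(1) by blast
    define u' where "u' = sqrt (1/\<alpha>) *\<^sub>R u"
    have "outer u' = (1/\<alpha>) *\<^sub>R outer u"
      unfolding u'_def outer_scaleR using ap by simp
    hence "N = sum_list (map outer (u' # us))" using us(2) unfolding N'_def
      by (simp add: algebra_simps)
    moreover have "u' \<in> range (\<lambda>v. N *v v)"
      unfolding u'_def u_def by (metis mv_scaleR rangeI)
    ultimately show ?thesis using us(1) P(3) by (intro exI[of _ "u' # us"]) auto
  qed
qed



lemma qform_0_vec[simp]: "qform A 0 = 0" by (simp add: qform_cin)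

lemma inner_sum_outer:
  "inner A (sum_list (map outer us)) = sum_list (map (\<lambda>u. Re (qform A u)) us)"
  by (induct us) (simp_all add: inner_add_right inner_outer)

lemma sum_list_pos:
  "(\<forall>x\<in>set xs. (f x::real) \<ge> 0) \<Longrightarrow> (\<exists>x\<in>set xs. f x > 0) \<Longrightarrow> sum_list (map f xs) > 0"
proof (induct xs)
  case Nil thus ?case by simp
next
  case (Cons a xs)
  show ?case
  proof (cases "f a > 0")
    case True
    have "sum_list (map f xs) \<ge> 0" using Cons(2) by (intro sum_list_nonneg) auto
    thus ?thesis using True by simp
  next
    case False
    hence "\<exists>x\<in>set xs. f x > 0" using Cons(3) by auto
    hence "sum_list (map f xs) > 0" using Cons by auto
    thus ?thesis using Cons(2) by (simp add: add_nonneg_pos)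
  qed
qed

lemma csubspace_imp_subspace: "csubspace V \<Longrightarrow> subspace V"
  unfolding csubspace_def subspace_def by (simp add: scaleR_smult)

lemma csubspace_range: "csubspace (range (\<lambda>v. (N::complex^'n^'n) *v v))"
  unfolding csubspace_def
  by (metis (no_types, lifting) matrix_vector_mult_0_right matrix_vector_right_distrib mv_smult rangeE rangeI)

lemma cert_indef:
  assumes herm: "\<forall>M\<in>Ms. hermitian M" and p: "psd N" and nz: "N \<noteq> 0"
    and orth: "\<forall>M\<in>Ms. hinner M N = 0" and rng: "range (\<lambda>v. N *v v) \<subseteq> U"
  shows "indefinite_on Ms U"
  unfolding indefinite_on_def
proof
  assume "\<exists>A\<in>span Ms. posdef_on A U"
  then obtain A where A: "A \<in> span Ms" "posdef_on A U" by blast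
  have sub: "subspace {A. inner A N = 0}"
    unfolding subspace_def by (simp add: inner_add_left)
  have "Ms \<subseteq> {A. inner A N = 0}" using herm orth inner_hinner by fastforce
  hence "span Ms \<subseteq> {A. inner A N = 0}" by (rule span_minimal[OF _ sub])
  hence z: "inner A N = 0" using A(1) by auto
  obtain us where us: "set us \<subseteq> range (\<lambda>v. N *v v)" "N = sum_list (map outer us)"
    using psd_decomp[OF p] by blast
  have inU: "set us \<subseteq> U" using us(1) rng by blast
  have "\<exists>u\<in>set us. u \<noteq> 0"
  proof (rule ccontr)
    assume "\<not> ?thesis"
    hence "sum_list (map outer us) = 0" by (induct us) auto
    hence "N = 0" using us(2) by simp
    thus False using nz by simp
  qed
  moreover have "\<forall>u\<in>set us. Re (qform A u) \<ge> 0"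
  proof
    fix u assume u: "u \<in> set us"
    show "Re (qform A u) \<ge> 0"
    proof (cases "u = 0")
      case True thus ?thesis by simp
    next
      case False thus ?thesis using A(2) inU u unfolding posdef_on_def by force
    qed
  qed
  moreover have "\<forall>u\<in>set us. u \<noteq> 0 \<longrightarrow> Re (qform A u) > 0"
    using A(2) inU unfolding posdef_on_def by blast
  ultimately have "sum_list (map (\<lambda>u. Re (qform A u)) us) > 0"
    by (intro sum_list_pos) blast+
  moreover have "inner A N = sum_list (map (\<lambda>u. Re (qform A u)) us)"
    by (subst us(2)) (rule inner_sum_outer)
  ultimately show False using z by simp
qed

lemma orth_range_kernel:
  assumes h: "hermitian N" and o: "\<forall>y. inner z (N *v y) = 0"
  shows "N *v z = 0"
proof -
  have "(norm (N *v z))^2 = Re (cin (N *v z) (N *v z))" by (simp add: Re_cin_self)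
  also have "\<dots> = Re (cin z (N *v (N *v z)))" by (simp add: herm_adj[OF h])
  also have "\<dots> = 0" using o by (simp add: Re_cin)
  finally show ?thesis by simp
qed

lemma range_kernel_zero:
  assumes h: "hermitian N" and k: "N *v x = 0" and r: "x \<in> range (\<lambda>v. N *v v)"
  shows "x = 0"
proof -
  obtain y where y: "x = N *v y" using r by auto
  have "(norm x)^2 = Re (cin (N *v y) x)" using y by (simp add: Re_cin_self)
  also have "\<dots> = Re (cin y (N *v x))" by (simp add: herm_adj[OF h])
  also have "\<dots> = 0" using k by simp
  finally show ?thesis by simp
qed



lemma trace_scaleR: "trace ((c *\<^sub>R A)::complex^'n^'n) = of_real c * trace A"
  unfolding trace_def by (simp add: cscaleR sum_distrib_left)

lemma cont_outer: "continuous_on UNIV (outer::complex^'n \<Rightarrow> _)"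
  unfolding outer_def by (intro continuous_intros)

lemma indef_cert:
  fixes Ms :: "(complex^'n^'n) set" and U :: "(complex^'n) set"
  assumes herm: "\<forall>M\<in>Ms. hermitian M" and U: "csubspace U" "U \<noteq> {0}"
    and ind: "indefinite_on Ms U"
  shows "\<exists>N. psd N \<and> N \<noteq> 0 \<and> range (\<lambda>v. N *v v) \<subseteq> U \<and> (\<forall>M\<in>Ms. hinner M N = 0)"
proof -
  have sU: "subspace U" using U(1) csubspace_imp_subspace by blast
  define S where "S = {x::complex^'n^'n. \<forall>M\<in>Ms. inner M x = 0}"
  have sS: "subspace S" unfolding S_def subspace_def
    by (simp add: inner_add_right)
  define U0 where "U0 = U \<inter> sphere 0 1"
  define T where "T = convex hull (outer ` U0)"
  define P where "P = {N. psd N \<and> Re (trace N) = 1 \<and> range (\<lambda>v. N *v v) \<subseteq> U}"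
  have cT: "compact T" unfolding T_def U0_def
    by (intro compact_convex_hull compact_continuous_image closed_Int_compact
        continuous_on_subset[OF cont_outer] closed_subspace[OF sU]) auto
  obtain v0 where v0: "v0 \<in> U" "v0 \<noteq> 0" using U csubspace_def by blast
  have sc: "c *\<^sub>R x \<in> U" if "x \<in> U" for c x using sU that by (simp add: subspace_scale)
  have inU0: "(1 / norm v) *\<^sub>R v \<in> U0" if "v \<in> U" "v \<noteq> 0" for v
    unfolding U0_def using sc[OF that(1)] that(2) by simp
  have Tne: "T \<noteq> {}" unfolding T_def using inU0[OF v0] by auto
  have "S \<inter> T \<noteq> {}"
  proof
    assume disj: "S \<inter> T = {}"
    obtain a b where ab: "\<forall>x\<in>S. inner a x < b" "\<forall>x\<in>T. b < inner a x"
      using separating_hyperplane_closed_compact[OF subspace_imp_convex[OF sS] closed_subspace[OF sS]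
          convex_convex_hull[of "outer ` U0", folded T_def] cT Tne disj] by blast
    have b0: "b > 0" using ab(1) subspace_0[OF sS] by force
    have aS: "inner a x = 0" if "x \<in> S" for x
    proof (rule ccontr)
      assume ne: "inner a x \<noteq> 0"
      have "((\<bar>b\<bar> + 1) / inner a x) *\<^sub>R x \<in> S" using sS that by (simp add: subspace_scale)
      hence "inner a (((\<bar>b\<bar> + 1) / inner a x) *\<^sub>R x) < b" using ab(1) by blast
      thus False using ne by simp
    qed
    obtain y z where yz: "y \<in> span Ms" "\<And>w. w \<in> span Ms \<Longrightarrow> orthogonal z w" "a = y + z"
      using orthogonal_subspace_decomp_exists[of Ms a] by blast
    have "z \<in> S" unfolding S_def
    proof (intro CollectI ballI)
      fix M assume "M \<in> Ms"
      hence "orthogonal z M" using yz(2) span_base by blast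
      thus "inner M z = 0" unfolding orthogonal_def by (simp add: inner_commute)
    qed
    hence "inner a z = 0" by (rule aS)
    hence "inner y z + inner z z = 0" unfolding yz(3) by (simp add: inner_add_left)
    moreover have "inner y z = 0" using yz(2)[OF yz(1)] unfolding orthogonal_def
      by (simp add: inner_commute)
    ultimately have "inner z z = 0" by simp
    hence "a = y" using yz(3) by simp
    hence aM: "a \<in> span Ms" using yz(1) by simp
    have "posdef_on a U"
      unfolding posdef_on_def
    proof (intro ballI impI)
      fix v assume v: "v \<in> U" "v \<noteq> 0"
      have "outer ((1 / norm v) *\<^sub>R v) \<in> T" unfolding T_def using inU0[OF v]
        by (intro hull_inc) auto
      hence "b < inner a (outer ((1 / norm v) *\<^sub>R v))" using ab(2) by blast
      hence "0 < Re (qform a ((1 / norm v) *\<^sub>R v))" using b0 inner_outer[of a "(1 / norm v) *\<^sub>R v"] by linarith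
      hence "0 < (1 / norm v)^2 * Re (qform a v)" by (simp add: qform_scaleR_vec)
      thus "0 < Re (qform a v)" using v(2) by (simp add: zero_less_mult_iff)
    qed
    thus False using ind aM unfolding indefinite_on_def by blast
  qed
  then obtain N where N: "N \<in> S" "N \<in> T" by blast
  have cP: "convex P" unfolding convex_def P_def
  proof (intro ballI allI impI)
    fix x y :: "complex^'n^'n" and u v :: real
    assume x: "x \<in> {N. psd N \<and> Re (trace N) = 1 \<and> range (\<lambda>v. N *v v) \<subseteq> U}"
      and y: "y \<in> {N. psd N \<and> Re (trace N) = 1 \<and> range (\<lambda>v. N *v v) \<subseteq> U}"
      and uv: "0 \<le> u" "0 \<le> v" "u + v = 1"
    have r: "(u *\<^sub>R x + v *\<^sub>R y) *v w \<in> U" for w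
    proof -
      have "x *v w \<in> U" "y *v w \<in> U" using x y by auto
      hence "u *\<^sub>R (x *v w) + v *\<^sub>R (y *v w) \<in> U" using sU sc by (simp add: subspace_add)
      thus ?thesis by (simp add: matrix_vector_mult_add_rdistrib scaleR_mv)
    qed
    show "u *\<^sub>R x + v *\<^sub>R y \<in> {N. psd N \<and> Re (trace N) = 1 \<and> range (\<lambda>v. N *v v) \<subseteq> U}"
      using x y uv r by (auto simp: psd_add psd_scaleR trace_add trace_scaleR)
  qed
  have "outer ` U0 \<subseteq> P"
  proof
    fix m assume "m \<in> outer ` U0"
    then obtain v where v: "v \<in> U0" "m = outer v" by blast
    have "range (\<lambda>w. outer v *v w) \<subseteq> U"
    proof
      fix r assume "r \<in> range (\<lambda>w. outer v *v w)"
      then obtain w where "r = outer v *v w" by blast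
      thus "r \<in> U" using v(1) U(1) unfolding U0_def csubspace_def by (simp add: outer_mv)
    qed
    thus "m \<in> P" unfolding P_def using v psd_outer trace_outer[of v] unfolding U0_def by simp
  qed
  hence "T \<subseteq> P" unfolding T_def using cP by (simp add: hull_minimal)
  hence NP: "psd N" "Re (trace N) = 1" "range (\<lambda>v. N *v v) \<subseteq> U" using N(2) P_def by auto
  have "N \<noteq> 0" using NP(2) by (auto simp: trace_def)
  moreover have "\<forall>M\<in>Ms. hinner M N = 0"
    using N(1) herm hinner_real psd_herm[OF NP(1)] unfolding S_def by fastforce
  ultimately show ?thesis using NP by blast
qed



lemma hinner_add: "hinner M (A + B) = hinner M A + hinner M B"
  unfolding hinner_def by (simp add: matrix_add_ldistrib trace_add)

lemma cont_Re_qform: "continuous_on S (\<lambda>s. Re (qform A s))"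
proof -
  have "continuous_on S (\<lambda>s. inner A (outer s))"
    by (intro continuous_on_inner continuous_on_const continuous_on_subset[OF cont_outer]) auto
  thus ?thesis by (simp add: inner_outer)
qed

lemma qpos:
  assumes p: "psd N" and r: "range (\<lambda>v. N *v v) = V" and s: "s \<in> V" "s \<noteq> 0"
  shows "Re (qform N s) > 0"
proof (rule ccontr)
  assume "\<not> ?thesis"
  hence "Re (qform N s) = 0" using psd_nonneg[OF p, of s] by simp
  hence "N *v s = 0" by (rule psd_kernel[OF p])
  hence "s = 0" using range_kernel_zero[OF psd_herm[OF p]] s r by blast
  thus False using s by simp
qed

lemma uniq:
  fixes Ms :: "(complex^'n^'n) set" and V :: "(complex^'n) set"
  assumes herm: "\<forall>M\<in>Ms. hermitian M" and V: "csubspace V" "V \<noteq> {0}"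
    and minW: "\<forall>W. csubspace W \<and> W \<noteq> {0} \<and> W \<subset> V \<longrightarrow> \<not> indefinite_on Ms W"
    and N: "psd N" "range (\<lambda>v. N *v v) = V" "\<forall>M\<in>Ms. hinner M N = 0"
    and N': "psd N'" "range (\<lambda>v. N' *v v) = V" "\<forall>M\<in>Ms. hinner M N' = 0"
  shows "\<exists>c::real. c > 0 \<and> N' = c *\<^sub>R N"
proof -
  have sV: "subspace V" using V(1) csubspace_imp_subspace by blast
  have hN: "hermitian N" "hermitian N'" using N(1) N'(1) psd_herm by auto
  define V0 where "V0 = V \<inter> sphere 0 1"
  have cV0: "compact V0" unfolding V0_def
    by (intro closed_Int_compact closed_subspace[OF sV]) auto
  obtain v0 where v0: "v0 \<in> V" "v0 \<noteq> 0" using V csubspace_def by blast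
  have sc: "c *\<^sub>R x \<in> V" if "x \<in> V" for c x using sV that by (simp add: subspace_scale)
  have inV0: "(1 / norm v) *\<^sub>R v \<in> V0" if "v \<in> V" "v \<noteq> 0" for v
    unfolding V0_def using sc[OF that(1)] that(2) by simp
  have V0ne: "V0 \<noteq> {}" using inV0[OF v0] by auto
  have q'pos: "Re (qform N' s) > 0" if "s \<in> V0" for s
  proof -
    have "s \<in> V" "norm s = 1" using that unfolding V0_def by auto
    hence "s \<noteq> 0" by auto
    thus ?thesis using qpos[OF N'(1) N'(2) \<open>s \<in> V\<close>] by blast
  qed
  define f where "f = (\<lambda>s. Re (qform N s) / Re (qform N' s))"
  have cf: "continuous_on V0 f" unfolding f_def
    using q'pos by (intro continuous_on_divide cont_Re_qform) force
  obtain x0 where x0: "x0 \<in> V0" "\<And>y. y \<in> V0 \<Longrightarrow> f x0 \<le> f y"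
    using continuous_attains_inf[OF cV0 V0ne cf] by blast
  define t where "t = f x0"
  have t0: "t \<ge> 0" unfolding t_def f_def using psd_nonneg[OF N(1)] q'pos[OF x0(1)] by simp
  define Ns where "Ns = N - t *\<^sub>R N'"
  have hNs: "hermitian Ns" unfolding Ns_def using hN by (simp add: herm_diff herm_scaleR)
  have qNs: "Re (qform Ns x) = Re (qform N x) - t * Re (qform N' x)" for x
    unfolding Ns_def by (simp add: qform_diff qform_scaleR)
  have onV: "Re (qform Ns y) \<ge> 0" if "y \<in> V" for y
  proof (cases "y = 0")
    case True thus ?thesis by simp
  next
    case False
    define s where "s = (1 / norm y) *\<^sub>R y"
    have sV0: "s \<in> V0" unfolding s_def using inV0[OF that False] .
    have "t \<le> f s" unfolding t_def using x0(2)[OF sV0] .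
    hence "t * Re (qform N' s) \<le> Re (qform N s)" unfolding f_def using q'pos[OF sV0]
      by (simp add: le_divide_eq)
    hence "Re (qform Ns s) \<ge> 0" using qNs by simp
    moreover have "y = norm y *\<^sub>R s" unfolding s_def using False by simp
    moreover have "Re (qform Ns (norm y *\<^sub>R s)) = (norm y)^2 * Re (qform Ns s)"
      by (simp add: qform_scaleR_vec)
    ultimately show ?thesis by simp
  qed
  have kerz: "A *v z = 0" if "hermitian A" "range (\<lambda>v. A *v v) = V"
      "\<And>w. w \<in> V \<Longrightarrow> orthogonal z w" for A z
    using orth_range_kernel[OF that(1)] that(2,3) unfolding orthogonal_def by blast
  have pNs: "psd Ns" unfolding psd_def
  proof (intro conjI allI hNs)
    fix x
    obtain y z where yz: "y \<in> span V" "\<And>w. w \<in> span V \<Longrightarrow> orthogonal z w" "x = y + z"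
      using orthogonal_subspace_decomp_exists[of V x] by blast
    have spV: "span V = V" using sV by (simp add: span_eq_iff)
    have "N *v z = 0" "N' *v z = 0" using kerz[OF hN(1) N(2)] kerz[OF hN(2) N'(2)] yz(2) spV
      by auto
    hence Nsz: "Ns *v z = 0" unfolding Ns_def by (simp add: matrix_vector_mult_diff_rdistrib scaleR_mv)
    have "qform Ns x = cin y (Ns *v y) + cin z (Ns *v y)"
      unfolding qform_cin yz(3) by (simp add: matrix_vector_right_distrib Nsz cin_add_left)
    also have "cin z (Ns *v y) = 0" using herm_adj[OF hNs, of z y] Nsz by simp
    finally have "qform Ns x = qform Ns y" by (simp add: qform_cin)
    thus "0 \<le> Re (qform Ns x)" using onV yz(1) spV by simp
  qed
  have "Re (qform Ns x0) = 0" using qNs[of x0] q'pos[OF x0(1)] unfolding t_def f_def by simp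
  hence Nsx0: "Ns *v x0 = 0" by (rule psd_kernel[OF pNs])
  have orth: "\<forall>M\<in>Ms. hinner M Ns = 0"
  proof
    fix M assume M: "M \<in> Ms"
    have "hinner M Ns = of_real (inner M Ns)" using hinner_real herm M hNs by blast
    also have "inner M Ns = inner M N - t * inner M N'" unfolding Ns_def
      by (simp add: inner_diff_right)
    also have "inner M N = 0" using inner_hinner herm M N(3) by fastforce
    also have "inner M N' = 0" using inner_hinner herm M N'(3) by fastforce
    finally show "hinner M Ns = 0" by simp
  qed
  have "Ns = 0"
  proof (rule ccontr)
    assume nz: "Ns \<noteq> 0"
    define W where "W = range (\<lambda>v. Ns *v v)"
    have cW: "csubspace W" unfolding W_def by (rule csubspace_range)
    have W0: "W \<noteq> {0}" unfolding W_def using matrix_nonzero[OF nz] by auto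
    have WV: "W \<subseteq> V"
    proof
      fix r assume "r \<in> W"
      then obtain y where y: "r = Ns *v y" unfolding W_def by blast
      have "N *v y \<in> V" "N' *v y \<in> V" using N(2) N'(2) by auto
      hence "N *v y - t *\<^sub>R (N' *v y) \<in> V" using sV sc by (simp add: subspace_diff)
      thus "r \<in> V" unfolding y Ns_def by (simp add: matrix_vector_mult_diff_rdistrib scaleR_mv)
    qed
    have "x0 \<notin> W" using range_kernel_zero[OF hNs Nsx0] x0(1) unfolding W_def V0_def by auto
    moreover have "x0 \<in> V" using x0(1) unfolding V0_def by auto
    ultimately have "W \<subset> V" using WV by blast
    moreover have "indefinite_on Ms W" using cert_indef[OF herm pNs nz orth] unfolding W_def by simp
    ultimately show False using minW cW W0 by blast
  qed
  hence NtN: "N = t *\<^sub>R N'" unfolding Ns_def by simp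
  have "N \<noteq> 0" using N(2) V(2) by auto
  hence "t \<noteq> 0" using NtN by auto
  hence tp: "t > 0" using t0 by simp
  have "N' = (1/t) *\<^sub>R N" using NtN tp by simp
  thus ?thesis using tp by (intro exI[of _ "1/t"]) simp
qed

theorem mainTheorem9:
  fixes Ms :: "(complex^'n^'n) set" and V :: "(complex^'n) set"
  assumes "\<forall>M\<in>Ms. hermitian M"
    and "csubspace V" and "V \<noteq> {0}"
  shows "minimal_wrt Ms V \<longleftrightarrow>
    (\<exists>N. psd N \<and> range (\<lambda>v. N *v v) = V \<and> (\<forall>M\<in>Ms. hinner M N = 0) \<and>
       (\<forall>N'. psd N' \<and> range (\<lambda>v. N' *v v) = V \<and> (\<forall>M\<in>Ms. hinner M N' = 0)
              \<longrightarrow> (\<exists>c::real. c > 0 \<and> N' = c *\<^sub>R N)))"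
proof
  assume "minimal_wrt Ms V"
  hence ind: "indefinite_on Ms V"
    and minW: "\<forall>W. csubspace W \<and> W \<noteq> {0} \<and> W \<subset> V \<longrightarrow> \<not> indefinite_on Ms W"
    unfolding minimal_wrt_def by blast+
  obtain N where N: "psd N" "N \<noteq> 0" "range (\<lambda>v. N *v v) \<subseteq> V" "\<forall>M\<in>Ms. hinner M N = 0"
    using indef_cert[OF assms(1,2,3) ind] by blast
  have "indefinite_on Ms (range (\<lambda>v. N *v v))"
    using cert_indef[OF assms(1) N(1,2,4)] by simp
  moreover have "range (\<lambda>v. N *v v) \<noteq> {0}" using matrix_nonzero[OF N(2)] by auto
  ultimately have NV: "range (\<lambda>v. N *v v) = V"
    using minW csubspace_range N(3) by blast
  show "\<exists>N. psd N \<and> range (\<lambda>v. N *v v) = V \<and> (\<forall>M\<in>Ms. hinner M N = 0) \<and>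
       (\<forall>N'. psd N' \<and> range (\<lambda>v. N' *v v) = V \<and> (\<forall>M\<in>Ms. hinner M N' = 0)
              \<longrightarrow> (\<exists>c::real. c > 0 \<and> N' = c *\<^sub>R N))"
    using uniq[OF assms minW N(1) NV N(4)] N(1,4) NV by blast
next
  assume "\<exists>N. psd N \<and> range (\<lambda>v. N *v v) = V \<and> (\<forall>M\<in>Ms. hinner M N = 0) \<and>
       (\<forall>N'. psd N' \<and> range (\<lambda>v. N' *v v) = V \<and> (\<forall>M\<in>Ms. hinner M N' = 0)
              \<longrightarrow> (\<exists>c::real. c > 0 \<and> N' = c *\<^sub>R N))"
  then obtain N where N: "psd N" "range (\<lambda>v. N *v v) = V" "\<forall>M\<in>Ms. hinner M N = 0"
    and U: "\<And>N'. psd N' \<Longrightarrow> range (\<lambda>v. N' *v v) = V \<Longrightarrow> (\<forall>M\<in>Ms. hinner M N' = 0)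
              \<Longrightarrow> (\<exists>c::real. c > 0 \<and> N' = c *\<^sub>R N)"
    by blast
  have sV: "subspace V" using assms(2) csubspace_imp_subspace by blast
  have hN: "hermitian N" using N(1) psd_herm by blast
  have Nnz: "N \<noteq> 0" using N(2) assms(3) by auto
  have ind: "indefinite_on Ms V" using cert_indef[OF assms(1) N(1) Nnz N(3)] N(2) by simp
  have "\<not> indefinite_on Ms W" if W: "csubspace W" "W \<noteq> {0}" "W \<subset> V" for W
  proof
    assume "indefinite_on Ms W"
    then obtain NW where NW: "psd NW" "NW \<noteq> 0" "range (\<lambda>v. NW *v v) \<subseteq> W"
        "\<forall>M\<in>Ms. hinner M NW = 0"
      using indef_cert[OF assms(1) W(1,2)] by blast
    define N2 where "N2 = N + NW"
    have p2: "psd N2" unfolding N2_def using N(1) NW(1) by (rule psd_add)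
    have h2: "hermitian N2" using p2 psd_herm by blast
    have o2: "\<forall>M\<in>Ms. hinner M N2 = 0" unfolding N2_def using N(3) NW(4) by (simp add: hinner_add)
    have "range (\<lambda>v. N2 *v v) = V"
    proof
      show "range (\<lambda>v. N2 *v v) \<subseteq> V"
      proof
        fix r assume "r \<in> range (\<lambda>v. N2 *v v)"
        then obtain y where y: "r = N2 *v y" by blast
        have "N *v y \<in> V" "NW *v y \<in> V" using N(2) NW(3) W(3) by auto
        thus "r \<in> V" unfolding y N2_def using sV by (simp add: matrix_vector_mult_add_rdistrib subspace_add)
      qed
      show "V \<subseteq> range (\<lambda>v. N2 *v v)"
      proof
        fix x assume x: "x \<in> V"
        have spR: "span (range (\<lambda>v. N2 *v v)) = range (\<lambda>v. N2 *v v)"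
          using subspace_range by (simp add: span_eq_iff)
        obtain y z where yz: "y \<in> range (\<lambda>v. N2 *v v)"
            "\<And>w. w \<in> range (\<lambda>v. N2 *v v) \<Longrightarrow> orthogonal z w" "x = y + z"
          using orthogonal_subspace_decomp_exists[of "range (\<lambda>v. N2 *v v)" x] spR by metis
        have "N2 *v z = 0" using orth_range_kernel[OF h2] yz(2) unfolding orthogonal_def by blast
        hence "Re (qform N2 z) = 0" by (simp add: qform_cin)
        hence "Re (qform N z) + Re (qform NW z) = 0" unfolding N2_def by (simp add: qform_add)
        hence "Re (qform N z) = 0" using psd_nonneg[OF N(1), of z] psd_nonneg[OF NW(1), of z] by linarith
        hence Nz: "N *v z = 0" by (rule psd_kernel[OF N(1)])
        have "y \<in> V" using yz(1) \<open>range (\<lambda>v. N2 *v v) \<subseteq> V\<close> by blast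
        hence "z \<in> V" using x yz(3) sV by (metis add_diff_cancel_left' subspace_diff)
        hence "z = 0" using range_kernel_zero[OF hN Nz] N(2) by blast
        thus "x \<in> range (\<lambda>v. N2 *v v)" using yz by simp
      qed
    qed
    then obtain c where c: "c > 0" "N2 = c *\<^sub>R N" using U[OF p2 _ o2] by blast
    hence NWc: "NW = (c - 1) *\<^sub>R N" unfolding N2_def by (simp add: algebra_simps)
    hence "c \<noteq> 1" using NW(2) by auto
    hence "N = (1 / (c - 1)) *\<^sub>R NW" using NWc by simp
    hence "V \<subseteq> W"
    proof -
      assume e: "N = (1 / (c - 1)) *\<^sub>R NW"
      show "V \<subseteq> W"
      proof
        fix v assume "v \<in> V"
        then obtain y where "v = N *v y" using N(2) by blast
        hence "v = NW *v ((1 / (c - 1)) *\<^sub>R y)" using e by (simp add: scaleR_mv mv_scaleR)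
        thus "v \<in> W" using NW(3) by blast
      qed
    qed
    thus False using W(3) by blast
  qed
  thus "minimal_wrt Ms V" unfolding minimal_wrt_def using assms(2,3) ind by blast
qed

end
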